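(* Consider the self-attention dynamics with LayerNorm $X^{(t+1)}=D^{(t)}A^{(t)}X^{(t)}W_V^{(t)}$, where $\mathcal{G}$ is strongly connected, \textbf{A1} and \textbf{A2} hold, every $W_V^{(t)}\in\mathbb{R}^{d\times d}$ is orthogonal, and the initial input $X^{(0)}$ has rows in $\mathbb{S}^{d-1}$, $N\le d$, and full rank $N$. Then there exist constants $C_1,C_2>0$ such that $C_1\le D^{(t)}_{i,i}\le C_2$ for all $t\ge0$ and all $i\in[N]$.
   Context: Tokens are the rows of $X\in\mathbb{R}^{N\times d}$. Attention mask: directed graph $\mathcal{G}$ on $[N]$, $(j,i)\in E(\mathcal{G})$ meaning token $i$ attends to token $j$; $\mathcal{N}_i=\{k:(k,i)\in E(\mathcal{G})\}$. Masked softmax: $\mathrm{softmax}_{\mathcal{G}}(R)_{ij}=\exp(R_{ij})/\sum_{k\in\mathcal{N}_i}\exp(R_{ik})$ if $(j,i)\in E(\mathcal{G})$, else $0$. $A^{(t)}=\mathrm{softmax}_{\mathcal{G}}\big(X^{(t)}W_Q^{(t)}(X^{(t)}W_K^{(t)})^\top/\sqrt{d_{QK}}\big)$, $D^{(t)}=\mathrm{diag}(d_1,\dots,d_N)$ with $d_i=1/\|(A^{(t)}X^{(t)}W_V^{(t)})_{i,:}\|_2$. \textbf{A1}: $(i,i)\in E(\mathcal{G})$ for all $i$. \textbf{A2}: $\sup_t\max\{\|W_Q^{(t)}\|_2,\|W_K^{(t)}\|_2\}<\infty$. Strongly connected: any two distinct nodes are mutually reachable by directed paths. *)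

theory Defs
  imports "HOL-Analysis.Analysis"
begin

text \<open>Tokens are rows of X :: real^'d^'n (N = CARD('n) tokens, dimension d = CARD('d)).
  The mask graph is an edge set E on 'n; (j,i) \<in> E means token i attends to token j.\<close>

definition nbrs :: "('n \<times> 'n) set \<Rightarrow> 'n \<Rightarrow> 'n set" where
  "nbrs E i = {k. (k, i) \<in> E}"

definition masked_softmax :: "('n::finite \<times> 'n) set \<Rightarrow> real^'n^'n \<Rightarrow> real^'n^'n" where
  "masked_softmax E R = (\<chi> i j. if (j, i) \<in> E
      then exp (R $ i $ j) / (\<Sum>k\<in>nbrs E i. exp (R $ i $ k)) else 0)"

definition attn :: "('n::finite \<times> 'n) set \<Rightarrow> real^'q::finite^'d::finite \<Rightarrow> real^'q^'d
    \<Rightarrow> real^'d^'n \<Rightarrow> real^'n^'n" where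
  "attn E WQ WK X = masked_softmax E
     ((1 / sqrt (real CARD('q))) *\<^sub>R ((X ** WQ) ** transpose (X ** WK)))"

text \<open>LayerNorm coefficient d_i = 1 / || (A X W_V)_{i,:} ||_2 (the diagonal entry D_{i,i}).\<close>
definition ln_coef :: "('n::finite \<times> 'n) set \<Rightarrow> real^'q::finite^'d::finite \<Rightarrow> real^'q^'d
    \<Rightarrow> real^'d^'d \<Rightarrow> real^'d^'n \<Rightarrow> 'n \<Rightarrow> real" where
  "ln_coef E WQ WK WV X i = 1 / norm (((attn E WQ WK X ** X) ** WV) $ i)"

definition ln_step :: "('n::finite \<times> 'n) set \<Rightarrow> real^'q::finite^'d::finite \<Rightarrow> real^'q^'d
    \<Rightarrow> real^'d^'d \<Rightarrow> real^'d^'n \<Rightarrow> real^'d^'n" where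
  "ln_step E WQ WK WV X =
     (\<chi> i j. ln_coef E WQ WK WV X i * (((attn E WQ WK X ** X) ** WV) $ i $ j))"

definition strongly_connected :: "('n \<times> 'n) set \<Rightarrow> bool" where
  "strongly_connected E \<longleftrightarrow> (\<forall>i j. i \<noteq> j \<longrightarrow> (i, j) \<in> E\<^sup>+ \<and> (j, i) \<in> E\<^sup>+)"

end

theory Submission
  imports Defs
begin

lemma row_mult: "(A ** B) $ i = (A $ i) v* (B::real^'c^'b)"
  by (simp add: vec_eq_iff matrix_matrix_mult_def vector_matrix_mult_def)

lemma orth_norm: "orthogonal_matrix (P::real^'d^'d) \<Longrightarrow> norm (x v* P) = norm x"
proof -
  assume P: "orthogonal_matrix P"
  have "orthogonal_transformation ((*v) (transpose P))"
    using P by (simp add: orthogonal_transformation_matrix matrix_vector_mul_linear)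
  hence "norm (transpose P *v x) = norm x" by (simp add: orthogonal_transformation)
  thus ?thesis by simp
qed

lemma bounded_below_X0:
  fixes X0 :: "real^'d^'n"
  assumes "rank X0 = CARD('n)"
  obtains s where "s > 0" "\<And>c. s * norm c \<le> norm (c v* X0)"
proof -
  have "rank (transpose X0) = CARD('n)" using assms by (simp add: rank_transpose)
  hence "inj ((*v) (transpose X0))" by (simp add: full_rank_injective)
  then obtain s where "s > 0" "\<And>x. s * norm x \<le> norm ((*v) (transpose X0) x)"
    using linear_inj_bounded_below_pos[OF matrix_vector_mul_linear] by blast
  thus ?thesis using that by simp
qed

lemma bounded_above_X0:
  fixes X0 :: "real^'d^'n"
  obtains K where "K > 0" "\<And>c. norm (c v* X0) \<le> K * norm c"
proof -
  obtain K where "K > 0" "\<And>x. norm ((*v) (transpose X0) x) \<le> K * norm x"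
    using linear_bounded_pos[OF matrix_vector_mul_linear] by blast
  thus ?thesis using that by simp
qed


lemma vm_sum: "x v* (M::real^'c^'b) = (\<Sum>j\<in>UNIV. x$j *\<^sub>R M$j)"
  by (simp add: vec_eq_iff vector_matrix_mult_def sum_component)

lemma nbrs_fin: "finite (nbrs E (i::'n::finite))" by simp

lemma sm_nonneg: "masked_softmax E R $ i $ j \<ge> 0"
  unfolding masked_softmax_def by (auto intro!: divide_nonneg_nonneg sum_nonneg)

lemma sm_sum:
  assumes "(i,i) \<in> E"
  shows "(\<Sum>j\<in>UNIV. masked_softmax E R $ i $ j) = 1"
proof -
  let ?S = "\<Sum>k\<in>nbrs E i. exp (R $ i $ k)"
  have pos: "?S > 0"
    using assms by (intro sum_pos2[of _ i]) (auto simp: nbrs_def)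
  have "(\<Sum>j\<in>UNIV. masked_softmax E R $ i $ j) = (\<Sum>j\<in>nbrs E i. exp (R $ i $ j) / ?S)"
  proof -
    have "(\<Sum>j\<in>UNIV. masked_softmax E R $ i $ j) = (\<Sum>j\<in>UNIV. if j \<in> nbrs E i then exp (R $ i $ j) / ?S else 0)"
      unfolding masked_softmax_def by (simp add: nbrs_def)
    also have "\<dots> = (\<Sum>j\<in>nbrs E i. exp (R $ i $ j) / ?S)"
      using sum.inter_restrict[of UNIV "\<lambda>j. exp (R $ i $ j) / ?S" "nbrs E i"] by simp
    finally show ?thesis .
  qed
  also have "\<dots> = ?S / ?S" by (rule sum_divide_distrib[symmetric])
  also have "\<dots> = 1" using pos by simp
  finally show ?thesis .
qed

lemma sm_diag:
  fixes R :: "real^'n::finite^'n"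
  assumes "(i,i) \<in> E" and L: "\<And>k. \<bar>R $ i $ k\<bar> \<le> L"
  shows "masked_softmax E R $ i $ i \<ge> exp (-2*L) / real CARD('n)"
proof -
  let ?S = "\<Sum>k\<in>nbrs E i. exp (R $ i $ k)"
  have pos: "?S > 0"
    using assms by (intro sum_pos2[of _ i]) (auto simp: nbrs_def)
  have "?S \<le> (\<Sum>k\<in>nbrs E i. exp L)"
    by (rule sum_mono) (use L abs_le_D1 in auto)
  also have "\<dots> = real (card (nbrs E i)) * exp L" by simp
  also have "\<dots> \<le> real CARD('n) * exp L"
    by (intro mult_right_mono) (simp_all add: card_mono[of UNIV "nbrs E i", simplified])
  finally have S: "?S \<le> real CARD('n) * exp L" .
  have e: "exp (-L) \<le> exp (R $ i $ i)" using L[of i] by simp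
  have "exp (-2*L) / real CARD('n) = exp (-L) / (real CARD('n) * exp L)"
    by (simp add: exp_add[symmetric] exp_minus field_simps mult_exp_exp)
  also have "\<dots> \<le> exp (R $ i $ i) / ?S"
    by (rule frac_le) (use e S pos in auto)
  also have "\<dots> = masked_softmax E R $ i $ i"
    using assms by (simp add: masked_softmax_def)
  finally show ?thesis .
qed


lemma prod_entry_bound:
  fixes X :: "real^'d::finite^'n" and W :: "real^'q^'d"
  assumes rows: "\<And>i. norm (X$i) = 1" and W: "\<And>a b. \<bar>W$a$b\<bar> \<le> B"
  shows "\<bar>(X ** W)$i$k\<bar> \<le> real CARD('d) * B"
proof -
  have "\<bar>(X ** W)$i$k\<bar> = \<bar>\<Sum>l\<in>UNIV. X$i$l * W$l$k\<bar>"
    by (simp add: matrix_matrix_mult_def)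
  also have "\<dots> \<le> (\<Sum>l\<in>UNIV. \<bar>X$i$l * W$l$k\<bar>)" by (rule sum_abs)
  also have "\<dots> \<le> (\<Sum>l\<in>(UNIV::'d set). B)"
  proof (rule sum_mono)
    fix l
    have "\<bar>X$i$l\<bar> \<le> 1" using component_le_norm_cart[of "X$i" l] rows[of i] by simp
    hence "\<bar>X$i$l\<bar> * \<bar>W$l$k\<bar> \<le> 1 * B"
      by (intro mult_mono) (use W[of l k] in auto)
    thus "\<bar>X$i$l * W$l$k\<bar> \<le> B" by (simp add: abs_mult)
  qed
  also have "\<dots> = real CARD('d) * B" by simp
  finally show ?thesis .
qed

lemma score_bound:
  fixes X :: "real^'d::finite^'n" and WQ WK :: "real^'q::finite^'d"
  assumes rows: "\<And>i. norm (X$i) = 1" and WQ: "\<And>a b. \<bar>WQ$a$b\<bar> \<le> B"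
    and WK: "\<And>a b. \<bar>WK$a$b\<bar> \<le> B"
  shows "\<bar>((1 / sqrt (real CARD('q))) *\<^sub>R ((X ** WQ) ** transpose (X ** WK)))$i$j\<bar>
     \<le> real CARD('q) * (real CARD('d) * B)^2"
proof -
  let ?c = "real CARD('d) * B"
  have B0: "B \<ge> 0" using WQ[of undefined undefined] by simp
  have c0: "?c \<ge> 0" using B0 by simp
  have s: "0 \<le> 1 / sqrt (real CARD('q))" "1 / sqrt (real CARD('q)) \<le> 1" by auto
  have "\<bar>\<Sum>k\<in>UNIV. (X ** WQ)$i$k * (X ** WK)$j$k\<bar> \<le> (\<Sum>k\<in>(UNIV::'q set). ?c^2)"
  proof -
    have "\<bar>\<Sum>k\<in>UNIV. (X ** WQ)$i$k * (X ** WK)$j$k\<bar> \<le> (\<Sum>k\<in>UNIV. \<bar>(X ** WQ)$i$k * (X ** WK)$j$k\<bar>)"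
      by (rule sum_abs)
    also have "\<dots> \<le> (\<Sum>k\<in>(UNIV::'q set). ?c^2)"
    proof (rule sum_mono)
      fix k
      show "\<bar>(X ** WQ)$i$k * (X ** WK)$j$k\<bar> \<le> ?c^2"
        unfolding abs_mult power2_eq_square
        by (intro mult_mono prod_entry_bound[OF rows] WQ WK) (auto simp: c0)
    qed
    finally show ?thesis .
  qed
  hence h: "\<bar>\<Sum>k\<in>UNIV. (X ** WQ)$i$k * (X ** WK)$j$k\<bar> \<le> real CARD('q) * ?c^2" by simp
  have "\<bar>((1 / sqrt (real CARD('q))) *\<^sub>R ((X ** WQ) ** transpose (X ** WK)))$i$j\<bar>
     = (1 / sqrt (real CARD('q))) * \<bar>\<Sum>k\<in>UNIV. (X ** WQ)$i$k * (X ** WK)$j$k\<bar>"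
    by (simp add: matrix_matrix_mult_def transpose_def abs_mult)
  also have "\<dots> \<le> 1 * (real CARD('q) * ?c^2)"
    by (intro mult_mono h s) auto
  finally show ?thesis by simp
qed

lemma scale_rows_mult:
  "(\<chi> i j. d i * (Z ** Q) $i$j) = (\<chi> i j. d i * Z$i$j) ** (Q::real^'c^'b)"
  by (simp add: vec_eq_iff matrix_matrix_mult_def sum_distrib_left mult.assoc)


lemma step_bounds:
  fixes E :: "('n::finite \<times> 'n) set" and X :: "real^'d::finite^'n" and X0 :: "real^'d^'n"
    and M :: "real^'n^'n" and P WV :: "real^'d^'d" and WQ WK :: "real^'q::finite^'d"
  assumes rows: "\<And>i. norm (X$i) = 1" and XM: "X = (M ** X0) ** P"
    and Mnn: "\<And>i j. M$i$j \<ge> 0" and P: "orthogonal_matrix P" and WV: "orthogonal_matrix WV"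
    and A1: "\<And>i. (i,i) \<in> E"
    and s: "s > 0" "\<And>c. s * norm c \<le> norm (c v* X0)"
    and K: "K > 0" "\<And>c. norm (c v* X0) \<le> K * norm c"
    and WQ: "\<And>a b. \<bar>WQ$a$b\<bar> \<le> B" and WK: "\<And>a b. \<bar>WK$a$b\<bar> \<le> B"
  shows "s * (exp (-2 * (real CARD('q) * (real CARD('d) * B)^2)) / real CARD('n)) / K
           \<le> norm (((attn E WQ WK X ** X) ** WV) $ i)
         \<and> norm (((attn E WQ WK X ** X) ** WV) $ i) \<le> 1"
proof -
  let ?L = "real CARD('q) * (real CARD('d) * B)^2"
  let ?a = "exp (-2 * ?L) / real CARD('n)"
  define A where "A = attn E WQ WK X"
  have Ann: "\<And>i j. A$i$j \<ge> 0" unfolding A_def attn_def by (rule sm_nonneg)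
  have Asum: "\<And>i. (\<Sum>j\<in>UNIV. A$i$j) = 1" unfolding A_def attn_def by (rule sm_sum[OF A1])
  have Adiag: "A$i$i \<ge> ?a" unfolding A_def attn_def
    by (rule sm_diag[OF A1]) (rule score_bound[OF rows WQ WK])
  have n1: "norm (((A ** X) ** WV) $ i) = norm ((A ** X) $ i)"
    by (simp add: row_mult orth_norm[OF WV])
  have up: "norm ((A ** X) $ i) \<le> 1"
  proof -
    have "norm ((A ** X) $ i) = norm (\<Sum>j\<in>UNIV. A$i$j *\<^sub>R X$j)" by (simp add: row_mult vm_sum)
    also have "\<dots> \<le> (\<Sum>j\<in>UNIV. norm (A$i$j *\<^sub>R X$j))" by (rule norm_sum)
    also have "\<dots> = (\<Sum>j\<in>UNIV. A$i$j)" using Ann rows by simp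
    finally show ?thesis using Asum by simp
  qed
  have Mi: "norm (M$i) \<ge> 1 / K"
  proof -
    have "1 = norm (X$i)" using rows by simp
    also have "\<dots> = norm (M$i v* X0)" by (simp add: XM row_mult orth_norm[OF P])
    also have "\<dots> \<le> K * norm (M$i)" by (rule K(2))
    finally show ?thesis using K(1) by (simp add: field_simps)
  qed
  have comp: "norm ((A$i$i) *\<^sub>R M$i) \<le> norm ((A ** M)$i)"
  proof (rule norm_le_componentwise_cart)
    fix k
    have "A$i$i * M$i$k \<le> (\<Sum>j\<in>UNIV. A$i$j * M$j$k)"
      by (rule member_le_sum[of i UNIV "\<lambda>j. A$i$j * M$j$k"]) (auto intro: mult_nonneg_nonneg Ann Mnn)
    moreover have "0 \<le> A$i$i * M$i$k" using Ann Mnn by simp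
    ultimately show "norm (((A$i$i) *\<^sub>R M$i) $ k) \<le> norm ((A ** M)$i $ k)"
      by (simp add: matrix_matrix_mult_def)
  qed
  have low: "s * ?a / K \<le> norm ((A ** X) $ i)"
  proof -
    have "(A ** X) $ i = ((A ** M)$i v* X0) v* P" by (simp add: XM matrix_mul_assoc row_mult)
    hence eq: "norm ((A ** X) $ i) = norm ((A ** M)$i v* X0)" by (simp add: orth_norm[OF P])
    have "s * ?a / K = s * (?a * (1 / K))" by simp
    also have "\<dots> \<le> s * (A$i$i * norm (M$i))"
      by (intro mult_left_mono mult_mono Adiag Mi) (use s K Ann in auto)
    also have "\<dots> = s * norm ((A$i$i) *\<^sub>R M$i)" using Ann by simp
    also have "\<dots> \<le> s * norm ((A ** M)$i)" using comp s by simp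
    also have "\<dots> \<le> norm ((A ** M)$i v* X0)" by (rule s(2))
    finally show ?thesis using eq by simp
  qed
  show ?thesis using n1 up low unfolding A_def by simp
qed


lemma step_inv:
  fixes E :: "('n::finite \<times> 'n) set" and X :: "real^'d::finite^'n" and X0 :: "real^'d^'n"
    and M :: "real^'n^'n" and P WV :: "real^'d^'d" and WQ WK :: "real^'q::finite^'d"
  assumes rows: "\<And>i. norm (X$i) = 1" and XM: "X = (M ** X0) ** P"
    and Mnn: "\<And>i j. M$i$j \<ge> 0" and P: "orthogonal_matrix P" and WV: "orthogonal_matrix WV"
    and A1: "\<And>i. (i,i) \<in> E"
    and s: "s > 0" "\<And>c. s * norm c \<le> norm (c v* X0)"
    and K: "K > 0" "\<And>c. norm (c v* X0) \<le> K * norm c"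
    and WQ: "\<And>a b. \<bar>WQ$a$b\<bar> \<le> B" and WK: "\<And>a b. \<bar>WK$a$b\<bar> \<le> B"
  shows "(\<forall>i. norm (ln_step E WQ WK WV X $ i) = 1) \<and>
    (\<exists>M' P'. ln_step E WQ WK WV X = (M' ** X0) ** P' \<and> (\<forall>i j. M'$i$j \<ge> 0) \<and> orthogonal_matrix P')"
proof
  let ?L = "real CARD('q) * (real CARD('d) * B)^2"
  let ?a = "exp (-2 * ?L) / real CARD('n)"
  define A where "A = attn E WQ WK X"
  define Y where "Y = (A ** X) ** WV"
  define d where "d = ln_coef E WQ WK WV X"
  have Ann: "\<And>i j. A$i$j \<ge> 0" unfolding A_def attn_def by (rule sm_nonneg)
  have pos: "\<And>i. norm (Y $ i) > 0"
  proof -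
    fix i
    have "s * ?a / K \<le> norm (Y $ i)"
      using step_bounds[OF rows XM Mnn P WV A1 s K WQ WK, of i] unfolding Y_def A_def by blast
    moreover have "s * ?a / K > 0" using s K by simp
    ultimately show "norm (Y $ i) > 0" by linarith
  qed
  have d: "\<And>i. d i = 1 / norm (Y $ i)" unfolding d_def ln_coef_def Y_def A_def ..
  have LS: "ln_step E WQ WK WV X = (\<chi> i j. d i * Y$i$j)"
    unfolding ln_step_def d_def Y_def A_def ..
  show "\<forall>i. norm (ln_step E WQ WK WV X $ i) = 1"
  proof
    fix i
    have "ln_step E WQ WK WV X $ i = d i *\<^sub>R Y $ i" by (simp add: LS vec_eq_iff)
    thus "norm (ln_step E WQ WK WV X $ i) = 1" using pos[of i] by (simp add: d)
  qed
  have Y: "Y = ((A ** M) ** X0) ** (P ** WV)" by (simp add: Y_def XM matrix_mul_assoc)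
  show "\<exists>M' P'. ln_step E WQ WK WV X = (M' ** X0) ** P' \<and> (\<forall>i j. M'$i$j \<ge> 0) \<and> orthogonal_matrix P'"
  proof (intro exI conjI allI)
    show "ln_step E WQ WK WV X = ((\<chi> i j. d i * (A ** M)$i$j) ** X0) ** (P ** WV)"
      unfolding LS Y scale_rows_mult ..
    fix i j
    have "d i \<ge> 0" using d[of i] by simp
    moreover have "(A ** M)$i$j \<ge> 0"
      by (simp add: matrix_matrix_mult_def sum_nonneg Ann Mnn)
    ultimately show "(\<chi> i j. d i * (A ** M)$i$j)$i$j \<ge> 0" by simp
  next
    show "orthogonal_matrix (P ** WV)" by (rule orthogonal_matrix_mul[OF P WV])
  qed
qed


theorem mainTheorem6:
  fixes E :: "('n::finite \<times> 'n) set"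
    and X :: "nat \<Rightarrow> real^'d::finite^'n"
    and WQ WK :: "nat \<Rightarrow> real^'q::finite^'d"
    and WV :: "nat \<Rightarrow> real^'d^'d"
  assumes sc: "strongly_connected E"
    and A1: "\<forall>i. (i, i) \<in> E"
    and A2: "\<exists>B. \<forall>t. onorm ((*v) (WQ t)) \<le> B \<and> onorm ((*v) (WK t)) \<le> B"
    and orth: "\<forall>t. orthogonal_matrix (WV t)"
    and sphere: "\<forall>i. norm (X 0 $ i) = 1"
    and Nd: "CARD('n) \<le> CARD('d)"
    and fullrank: "rank (X 0) = CARD('n)"
    and dyn: "\<forall>t. X (Suc t) = ln_step E (WQ t) (WK t) (WV t) (X t)"
  shows "\<exists>C1 C2. C1 > 0 \<and> C2 > 0 \<and>
           (\<forall>t i. C1 \<le> ln_coef E (WQ t) (WK t) (WV t) (X t) i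
                 \<and> ln_coef E (WQ t) (WK t) (WV t) (X t) i \<le> C2)"
proof -
  obtain B where B: "\<And>t. onorm ((*v) (WQ t)) \<le> B \<and> onorm ((*v) (WK t)) \<le> B" using A2 by blast
  have WQ: "\<And>t a b. \<bar>WQ t$a$b\<bar> \<le> B" using B matrix_component_le_onorm order_trans by blast
  have WK: "\<And>t a b. \<bar>WK t$a$b\<bar> \<le> B" using B matrix_component_le_onorm order_trans by blast
  obtain s where s: "s > 0" "\<And>c. s * norm c \<le> norm (c v* X 0)"
    using bounded_below_X0[OF fullrank] by blast
  obtain K where K: "K > 0" "\<And>c. norm (c v* X 0) \<le> K * norm c"
    using bounded_above_X0 by blast
  have A1': "\<And>i. (i,i) \<in> E" using A1 by blast
  define I where "I t \<longleftrightarrow> (\<forall>i. norm (X t $ i) = 1) \<and>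
    (\<exists>M P. X t = (M ** X 0) ** P \<and> (\<forall>i j. M$i$j \<ge> (0::real)) \<and> orthogonal_matrix P)" for t
  have inv: "I t" for t
  proof (induction t)
    case 0
    have "X 0 = (mat 1 ** X 0) ** mat 1" by simp
    moreover have "\<forall>i j. (mat 1 :: real^'n^'n)$i$j \<ge> 0" by (simp add: mat_def)
    ultimately show ?case unfolding I_def using sphere orthogonal_matrix_id by blast
  next
    case (Suc t)
    then obtain M P where r: "\<And>i. norm (X t $ i) = 1" and XM: "X t = (M ** X 0) ** P"
      and Mnn: "\<And>i j. M$i$j \<ge> 0" and P: "orthogonal_matrix P" unfolding I_def by blast
    show ?case unfolding I_def dyn[rule_format]
      by (rule step_inv[OF r XM Mnn P orth[rule_format] A1' s K WQ WK])
  qed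
  let ?L = "real CARD('q) * (real CARD('d) * B)^2"
  let ?a = "exp (-2 * ?L) / real CARD('n)"
  show ?thesis
  proof (intro exI conjI allI)
    show "(1::real) > 0" by simp
    show "K / (s * ?a) > 0" using s K by simp
    fix t i
    obtain M P where r: "\<And>i. norm (X t $ i) = 1" and XM: "X t = (M ** X 0) ** P"
      and Mnn: "\<And>i j. M$i$j \<ge> 0" and P: "orthogonal_matrix P" using inv[of t] unfolding I_def by blast
    have b: "s * ?a / K \<le> norm (((attn E (WQ t) (WK t) (X t) ** X t) ** WV t) $ i)"
        "norm (((attn E (WQ t) (WK t) (X t) ** X t) ** WV t) $ i) \<le> 1"
      using step_bounds[OF r XM Mnn P orth[rule_format] A1' s K WQ WK, where i=i] by auto
    have p: "s * ?a / K > 0" using s K by simp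
    define nv where "nv = norm (((attn E (WQ t) (WK t) (X t) ** X t) ** WV t) $ i)"
    have nv: "s * ?a / K \<le> nv" "nv \<le> 1" using b unfolding nv_def by auto
    have nvp: "nv > 0" using nv p by linarith
    have lc: "ln_coef E (WQ t) (WK t) (WV t) (X t) i = 1 / nv" unfolding ln_coef_def nv_def ..
    show "1 \<le> ln_coef E (WQ t) (WK t) (WV t) (X t) i"
      unfolding lc using nv nvp by (simp add: field_simps)
    have "1 / nv \<le> 1 / (s * ?a / K)"
      by (rule divide_left_mono) (use nv nvp p mult_pos_pos[OF nvp p] in auto)
    also have "\<dots> = K / (s * ?a)" by simp
    finally show "ln_coef E (WQ t) (WK t) (WV t) (X t) i \<le> K / (s * ?a)" unfolding lc .
  qed
qed

end
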